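(* Let $Q=\langle b\rangle\ltimes_{(g,\gamma)}X$. Then $$1\times\langle\mathrm{Img}(\gamma)\rangle=A(Q)\le C(Q)=Q'=1\times\langle\mathrm{Img}(\gamma)\cup\mathrm{Img}(1-g)\rangle,$$ where $\langle S\rangle$ denotes the subgroup of $(X,+)$ generated by $S$ and $\mathrm{Img}(1-g)=\{x-g(x):x\in X\}$.
   Context: Let $(X,+)$ be an abelian group and $(g,\gamma)$ a construction pair on it: $g$ a permutation of $X$, $\gamma:X\times X\to X$ symmetric, alternating, biadditive, with (C1) $g^{-1}(g(x)+g(y))=x+y+\gamma(x,y)+g^{-1}(\gamma(x,y))+g^{-2}(\gamma(x,y))$, (C2) $\gamma(\gamma(x,y),z)=0$, (C3) $g^{-1}(\gamma(x,y))=\gamma(g(x),y)$ for all $x,y,z$. Let $\mathrm{Rad}(\gamma)=\{x:\gamma(x,y)=0\ \forall y\}$, $\mathrm{Img}(\gamma)$ the image of $\gamma$, and $r(g,\gamma)$ the least positive $r$ with $\sum_{0\le k<r}g^k(x)\in\mathrm{Rad}(\gamma)$ for all $x$ ($\infty$ if none). $I(i,j)$ is $\emptyset$ if $i=j$, $\{i,\dots,j-1\}$ if $i<j$, $\{j,\dots,i-1\}$ if $j<i$. For a cyclic group $C=\langle b\rangle$ such that (if finite) $|g|$ and $r(g,\gamma)$ divide $|C|$, $C\ltimes_{(g,\gamma)}X$ is the Moufang loop on $C\times X$ with multiplication $(b^i,x)(b^j,y)=(b^{i+j},g^{-j}(x)+y+\sum_{k\in I(i+j,-j)}g^{-k}(\gamma(x,y)))$.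 For a loop $Q$, the commutator subloop $C(Q)$ (resp. associator subloop $A(Q)$, resp. derived subloop $Q'$) is the smallest normal subloop $N$ such that $Q/N$ is commutative (resp. a group, resp. an abelian group). *)

theory Defs
  imports Main "HOL-Computational_Algebra.Group_Closure"
begin

definition biadditive :: "('a::ab_group_add \<Rightarrow> 'a \<Rightarrow> 'a) \<Rightarrow> bool" where
  "biadditive \<gamma> \<longleftrightarrow> (\<forall>x y z. \<gamma> (x + y) z = \<gamma> x z + \<gamma> y z) \<and> (\<forall>x y z. \<gamma> x (y + z) = \<gamma> x y + \<gamma> x z)"

definition construction_pair :: "('a::ab_group_add \<Rightarrow> 'a) \<Rightarrow> ('a \<Rightarrow> 'a \<Rightarrow> 'a) \<Rightarrow> bool" where
  "construction_pair g \<gamma> \<longleftrightarrow>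
     bij g \<and>
     (\<forall>x y. \<gamma> x y = \<gamma> y x) \<and>
     (\<forall>x. \<gamma> x x = 0) \<and>
     biadditive \<gamma> \<and>
     (\<forall>x y. inv g (g x + g y) = x + y + \<gamma> x y + inv g (\<gamma> x y) + inv g (inv g (\<gamma> x y))) \<and>
     (\<forall>x y z. \<gamma> (\<gamma> x y) z = 0) \<and>
     (\<forall>x y. inv g (\<gamma> x y) = \<gamma> (g x) y)"

definition Rad :: "('a::ab_group_add \<Rightarrow> 'a \<Rightarrow> 'a) \<Rightarrow> 'a set" where
  "Rad \<gamma> = {x. \<forall>y. \<gamma> x y = 0}"

definition Img :: "('a \<Rightarrow> 'a \<Rightarrow> 'a) \<Rightarrow> 'a set" where
  "Img \<gamma> = {\<gamma> x y | x y. True}"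

definition gpow :: "('a \<Rightarrow> 'a) \<Rightarrow> int \<Rightarrow> 'a \<Rightarrow> 'a" where
  "gpow g k = (if 0 \<le> k then g ^^ nat k else inv g ^^ nat (- k))"

text \<open>Order of a permutation; 0 encodes infinite order.\<close>
definition perm_order :: "('a \<Rightarrow> 'a) \<Rightarrow> nat" where
  "perm_order g = (if \<exists>m>0. g ^^ m = id then LEAST m. m > 0 \<and> g ^^ m = id else 0)"

text \<open>r(g,gamma); 0 encodes infinity.\<close>
definition r_const :: "('a::ab_group_add \<Rightarrow> 'a) \<Rightarrow> ('a \<Rightarrow> 'a \<Rightarrow> 'a) \<Rightarrow> nat" where
  "r_const g \<gamma> = (if \<exists>r>0. \<forall>x. (\<Sum>k<r. (g ^^ k) x) \<in> Rad \<gamma>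
                   then LEAST r. r > 0 \<and> (\<forall>x. (\<Sum>k<r. (g ^^ k) x) \<in> Rad \<gamma>) else 0)"

definition Iset :: "int \<Rightarrow> int \<Rightarrow> int set" where
  "Iset i j = (if i = j then {} else if i < j then {i..j - 1} else {j..i - 1})"

text \<open>The cyclic group C = <b> of order n (n = 0 means infinite cyclic); b^i is represented by
  the exponent i, with 0 \<le> i < n when n > 0 and i \<in> \<int> when n = 0. Note that (i + j) mod 0 = i + j.\<close>

definition sdp_carrier :: "nat \<Rightarrow> (int \<times> 'a) set" where
  "sdp_carrier n = (if n = 0 then UNIV else {0..<int n}) \<times> UNIV"

definition sdp_mult :: "nat \<Rightarrow> ('a::ab_group_add \<Rightarrow> 'a) \<Rightarrow> ('a \<Rightarrow> 'a \<Rightarrow> 'a)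
    \<Rightarrow> int \<times> 'a \<Rightarrow> int \<times> 'a \<Rightarrow> int \<times> 'a" where
  "sdp_mult n g \<gamma> p q = (case p of (i, x) \<Rightarrow> case q of (j, y) \<Rightarrow>
     ((i + j) mod int n,
      gpow g (- j) x + y + (\<Sum>k\<in>Iset (i + j) (- j). gpow g (- k) (\<gamma> x y))))"

definition sdp_one :: "int \<times> 'a::ab_group_add" where
  "sdp_one = (0, 0)"

definition lcoset :: "('b \<Rightarrow> 'b \<Rightarrow> 'b) \<Rightarrow> 'b \<Rightarrow> 'b set \<Rightarrow> 'b set" where
  "lcoset m x N = (\<lambda>n. m x n) ` N"

definition rcoset :: "('b \<Rightarrow> 'b \<Rightarrow> 'b) \<Rightarrow> 'b set \<Rightarrow> 'b \<Rightarrow> 'b set" where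
  "rcoset m N x = (\<lambda>n. m n x) ` N"

definition subloop :: "'b set \<Rightarrow> ('b \<Rightarrow> 'b \<Rightarrow> 'b) \<Rightarrow> 'b \<Rightarrow> 'b set \<Rightarrow> bool" where
  "subloop Q m e N \<longleftrightarrow> N \<subseteq> Q \<and> e \<in> N \<and> (\<forall>a\<in>N. \<forall>b\<in>N. m a b \<in> N) \<and>
     (\<forall>a\<in>N. \<forall>b\<in>N. \<forall>x\<in>Q. (m a x = b \<longrightarrow> x \<in> N) \<and> (m x a = b \<longrightarrow> x \<in> N))"

definition normal_subloop :: "'b set \<Rightarrow> ('b \<Rightarrow> 'b \<Rightarrow> 'b) \<Rightarrow> 'b \<Rightarrow> 'b set \<Rightarrow> bool" where
  "normal_subloop Q m e N \<longleftrightarrow> subloop Q m e N \<and>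
     (\<forall>x\<in>Q. \<forall>y\<in>Q. lcoset m x N = rcoset m N x \<and>
        (\<lambda>n. m (m n x) y) ` N = rcoset m N (m x y) \<and>
        (\<lambda>n. m y (m x n)) ` N = lcoset m (m y x) N)"

text \<open>Q/N has elements xN with (xN)(yN) = (xy)N.\<close>
definition quot_commutative :: "'b set \<Rightarrow> ('b \<Rightarrow> 'b \<Rightarrow> 'b) \<Rightarrow> 'b set \<Rightarrow> bool" where
  "quot_commutative Q m N \<longleftrightarrow> (\<forall>x\<in>Q. \<forall>y\<in>Q. lcoset m (m x y) N = lcoset m (m y x) N)"

definition quot_associative :: "'b set \<Rightarrow> ('b \<Rightarrow> 'b \<Rightarrow> 'b) \<Rightarrow> 'b set \<Rightarrow> bool" where
  "quot_associative Q m N \<longleftrightarrow>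
     (\<forall>x\<in>Q. \<forall>y\<in>Q. \<forall>z\<in>Q. lcoset m (m (m x y) z) N = lcoset m (m x (m y z)) N)"

definition is_smallest :: "('b set \<Rightarrow> bool) \<Rightarrow> 'b set \<Rightarrow> bool" where
  "is_smallest P N \<longleftrightarrow> P N \<and> (\<forall>M. P M \<longrightarrow> N \<subseteq> M)"

definition is_commutator_subloop :: "'b set \<Rightarrow> ('b \<Rightarrow> 'b \<Rightarrow> 'b) \<Rightarrow> 'b \<Rightarrow> 'b set \<Rightarrow> bool" where
  "is_commutator_subloop Q m e N \<longleftrightarrow>
     is_smallest (\<lambda>M. normal_subloop Q m e M \<and> quot_commutative Q m M) N"

definition is_associator_subloop :: "'b set \<Rightarrow> ('b \<Rightarrow> 'b \<Rightarrow> 'b) \<Rightarrow> 'b \<Rightarrow> 'b set \<Rightarrow> bool" where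
  "is_associator_subloop Q m e N \<longleftrightarrow>
     is_smallest (\<lambda>M. normal_subloop Q m e M \<and> quot_associative Q m M) N"

definition is_derived_subloop :: "'b set \<Rightarrow> ('b \<Rightarrow> 'b \<Rightarrow> 'b) \<Rightarrow> 'b \<Rightarrow> 'b set \<Rightarrow> bool" where
  "is_derived_subloop Q m e N \<longleftrightarrow>
     is_smallest (\<lambda>M. normal_subloop Q m e M \<and> quot_commutative Q m M \<and> quot_associative Q m M) N"

end

theory Submission imports Defs begin

locale cpair =
  fixes g :: "'a::ab_group_add \<Rightarrow> 'a" and \<gamma> :: "'a \<Rightarrow> 'a \<Rightarrow> 'a"
  assumes cp: "construction_pair g \<gamma>"
begin

abbreviation "h \<equiv> inv g"

lemma bijg: "bij g" using cp unfolding construction_pair_def by blast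
lemma hg[simp]: "h (g x) = x" using bijg by (simp add: bij_is_inj)
lemma gh[simp]: "g (h x) = x" using bijg by (simp add: bij_is_surj surj_f_inv_f)
lemma gsym: "\<gamma> x y = \<gamma> y x" using cp unfolding construction_pair_def by blast
lemma galt[simp]: "\<gamma> x x = 0" using cp unfolding construction_pair_def by blast
lemma gaddl[simp]: "\<gamma> (x + y) z = \<gamma> x z + \<gamma> y z"
  using cp unfolding construction_pair_def biadditive_def by blast
lemma gaddr[simp]: "\<gamma> z (x + y) = \<gamma> z x + \<gamma> z y"
  using cp unfolding construction_pair_def biadditive_def by blast
lemma C1: "h (g x + g y) = x + y + \<gamma> x y + h (\<gamma> x y) + h (h (\<gamma> x y))"
  using cp unfolding construction_pair_def by blast
lemma C2[simp]: "\<gamma> (\<gamma> x y) z = 0" using cp unfolding construction_pair_def by blast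
lemma C3: "h (\<gamma> x y) = \<gamma> (g x) y" using cp unfolding construction_pair_def by blast

lemma g0l[simp]: "\<gamma> 0 y = 0"
  using gaddl[of 0 0 y] by simp
lemma g0r[simp]: "\<gamma> y 0 = 0"
  using gaddr[of y 0 0] by simp
lemma gminl[simp]: "\<gamma> (- x) y = - \<gamma> x y"
proof -
  have "\<gamma> (x + - x) y = \<gamma> x y + \<gamma> (- x) y" by (rule gaddl)
  then show ?thesis by (simp add: eq_neg_iff_add_eq_0 add.commute)
qed
lemma gminr[simp]: "\<gamma> y (- x) = - \<gamma> y x"
proof -
  have "\<gamma> y (x + - x) = \<gamma> y x + \<gamma> y (- x)" by (rule gaddr)
  then show ?thesis by (simp add: eq_neg_iff_add_eq_0 add.commute)
qed
lemma gdiffl[simp]: "\<gamma> (x - z) y = \<gamma> x y - \<gamma> z y"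
  by (simp only: diff_conv_add_uminus gaddl gminl)
lemma gdiffr[simp]: "\<gamma> y (x - z) = \<gamma> y x - \<gamma> y z"
  by (simp only: diff_conv_add_uminus gaddr gminr)
lemma C2r[simp]: "\<gamma> z (\<gamma> x y) = 0" using gsym C2 by metis

lemma h0[simp]: "h 0 = 0"
proof -
  have "h (\<gamma> 0 (g 0)) = \<gamma> (g 0) (g 0)" by (rule C3)
  then show ?thesis by simp
qed
lemma g0[simp]: "g 0 = 0" using gh[of 0] by simp

lemma gamma_h: "\<gamma> (h x) y = g (\<gamma> x y)"
  using C3[of "h x" y] by (metis gh)

definition Rad' where "Rad' = {x. \<forall>y. \<gamma> x y = 0}"

lemma radI: "(\<And>y. \<gamma> x y = 0) \<Longrightarrow> x \<in> Rad'" by (simp add: Rad'_def)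
lemma radD[simp]: "x \<in> Rad' \<Longrightarrow> \<gamma> x y = 0" by (simp add: Rad'_def)
lemma radD2[simp]: "x \<in> Rad' \<Longrightarrow> \<gamma> y x = 0" by (metis gsym radD)

lemma rad_g: "x \<in> Rad' \<Longrightarrow> g x \<in> Rad'"
  by (rule radI) (metis C3 h0 radD)
lemma rad_h: "x \<in> Rad' \<Longrightarrow> h x \<in> Rad'"
  by (rule radI) (metis gamma_h g0 radD)

lemma h_add_rad: "r \<in> Rad' \<Longrightarrow> h (x + r) = h x + h r"
proof -
  assume r: "r \<in> Rad'"
  have "h (g (h x) + g (h r)) = h x + h r + \<gamma> (h x) (h r) + h (\<gamma> (h x) (h r)) + h (h (\<gamma> (h x) (h r)))"
    by (rule C1)
  moreover have "\<gamma> (h x) (h r) = 0" using rad_h[OF r] by simp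
  ultimately show ?thesis by simp
qed

lemma g_add_rad: "r \<in> Rad' \<Longrightarrow> g (x + r) = g x + g r"
proof -
  assume r: "r \<in> Rad'"
  have "h (g x + g r) = x + r" using C1[of x r] r by simp
  then show ?thesis by (metis gh)
qed

definition R where "R = group_closure (Img \<gamma>)"

lemma img_R: "\<gamma> x y \<in> R" unfolding R_def Img_def by (auto intro: group_closure.base)
lemma R0[simp]: "0 \<in> R" unfolding R_def by simp
lemma R_add: "a \<in> R \<Longrightarrow> b \<in> R \<Longrightarrow> a + b \<in> R" unfolding R_def by (rule group_closure_add)
lemma R_diff: "a \<in> R \<Longrightarrow> b \<in> R \<Longrightarrow> a - b \<in> R" unfolding R_def by (rule group_closure.diff)
lemma R_minus: "a \<in> R \<Longrightarrow> - a \<in> R" unfolding R_def by simp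

lemma R_rad: "x \<in> R \<Longrightarrow> x \<in> Rad'"
  unfolding R_def
proof (induction rule: group_closure.induct)
  case (base s) then show ?case by (auto simp: Img_def intro: radI)
next
  case (diff s t) then show ?case by (auto intro: radI)
qed

lemma h_minus_rad: "r \<in> Rad' \<Longrightarrow> h (- r) = - h r"
proof -
  assume r: "r \<in> Rad'"
  have "h (- r + r) = h (-r) + h r" by (rule h_add_rad[OF r])
  then show ?thesis by (simp add: eq_neg_iff_add_eq_0)
qed
lemma g_minus_rad: "r \<in> Rad' \<Longrightarrow> g (- r) = - g r"
proof -
  assume r: "r \<in> Rad'"
  have "g (- r + r) = g (-r) + g r" by (rule g_add_rad[OF r])
  then show ?thesis by (simp add: eq_neg_iff_add_eq_0)
qed

lemma h_R: "x \<in> R \<Longrightarrow> h x \<in> R"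
proof -
  assume "x \<in> R"
  then show ?thesis unfolding R_def
  proof (induction rule: group_closure.induct)
    case (base s) then show ?case using img_R[of "g _"] by (auto simp: Img_def C3 R_def)
  next
    case (diff s t)
    have "t \<in> Rad'" using diff R_rad unfolding R_def by blast
    then have "h (s - t) = h s - h t" using h_add_rad[of "-t" s] h_minus_rad
      by (metis diff_conv_add_uminus rad_h radI radD gminl neg_equal_0_iff_equal)
    then show ?case using diff by (simp add: group_closure.diff)
  qed
qed

lemma g_R: "x \<in> R \<Longrightarrow> g x \<in> R"
proof -
  assume "x \<in> R"
  then show ?thesis unfolding R_def
  proof (induction rule: group_closure.induct)
    case (base s) then show ?case using img_R[of "h _"] by (auto simp: Img_def gamma_h[symmetric] R_def)
  next
    case (diff s t)
    have "t \<in> Rad'" using diff R_rad unfolding R_def by blast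
    then have "g (s - t) = g s - g t" using g_add_rad[of "-t" s] g_minus_rad
      by (metis diff_conv_add_uminus radI radD gminl neg_equal_0_iff_equal)
    then show ?case using diff by (simp add: group_closure.diff)
  qed
qed

definition \<delta> where "\<delta> x y = \<gamma> x y + h (\<gamma> x y) + h (h (\<gamma> x y))"
lemma delta_R: "\<delta> x y \<in> R"
  unfolding \<delta>_def by (intro R_add img_R h_R)

lemma h_add_mod: "h (a + b) - h a - h b \<in> R"
proof -
  have "h (g (h a) + g (h b)) = h a + h b + \<delta> (h a) (h b)" unfolding \<delta>_def using C1[of "h a" "h b"] by (simp add: add.assoc)
  then show ?thesis using delta_R by simp
qed

lemma g_add_mod: "g (a + b) - g a - g b \<in> R"
proof -
  have "h (g a + g b) = a + b + \<delta> a b" unfolding \<delta>_def using C1 by (simp add: add.assoc)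
  then have "g a + g b = g (a + b + \<delta> a b)" by (metis gh)
  also have "\<dots> = g (a + b) + g (\<delta> a b)" using g_add_rad R_rad delta_R by blast
  finally have "g (a + b) - g a - g b = - g (\<delta> a b)" by (simp add: algebra_simps)
  then show ?thesis using R_minus g_R delta_R by simp
qed


definition good where
  "good f \<longleftrightarrow> f 0 = 0 \<and> (\<forall>x. x \<in> R \<longrightarrow> f x \<in> R) \<and> (\<forall>x. x \<in> Rad' \<longrightarrow> f x \<in> Rad')
     \<and> (\<forall>x r. r \<in> Rad' \<longrightarrow> f (x + r) = f x + f r) \<and> (\<forall>a b. f (a + b) - f a - f b \<in> R)"

lemma good_g: "good g"
  unfolding good_def using g_R rad_g g_add_rad g_add_mod by simp
lemma good_h: "good h"
  unfolding good_def using h_R rad_h h_add_rad h_add_mod by simp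
lemma good_id: "good id"
  unfolding good_def by simp
lemma good_comp: "good f1 \<Longrightarrow> good f2 \<Longrightarrow> good (f1 \<circ> f2)"
proof -
  assume g1: "good f1" and g2: "good f2"
  have "f1 (f2 (a + b)) - f1 (f2 a) - f1 (f2 b) \<in> R" for a b
  proof -
    define \<rho> where "\<rho> = f2 (a + b) - f2 a - f2 b"
    have \<rho>R: "\<rho> \<in> R" using g2 unfolding good_def \<rho>_def by blast
    have e: "f2 (a + b) = (f2 a + f2 b) + \<rho>" unfolding \<rho>_def by simp
    have "f1 (f2 (a + b)) = f1 (f2 a + f2 b) + f1 \<rho>"
      unfolding e using g1 \<rho>R R_rad unfolding good_def by blast
    then have "f1 (f2 (a + b)) - f1 (f2 a) - f1 (f2 b) = (f1 (f2 a + f2 b) - f1 (f2 a) - f1 (f2 b)) + f1 \<rho>"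
      by (simp add: algebra_simps)
    moreover have "f1 (f2 a + f2 b) - f1 (f2 a) - f1 (f2 b) \<in> R" using g1 unfolding good_def by blast
    moreover have "f1 \<rho> \<in> R" using g1 \<rho>R unfolding good_def by blast
    ultimately show ?thesis by (metis R_add)
  qed
  moreover have "f1 (f2 (x + r)) = f1 (f2 x) + f1 (f2 r)" if "r \<in> Rad'" for x r
    using g1 g2 that unfolding good_def by simp
  ultimately show ?thesis using g1 g2 unfolding good_def by simp
qed

lemma good_pow: "good f \<Longrightarrow> good (f ^^ k)"
  by (induction k) (simp_all add: good_id good_comp)

lemma gpow_good: "good (gpow g k)"
  unfolding gpow_def using good_pow good_g good_h by simp

lemma gpow_0[simp]: "gpow g 0 = id" by (simp add: gpow_def)

lemma gpow_succ: "gpow g (k + 1) x = g (gpow g k x)"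
proof (cases "k \<ge> 0")
  case True
  then have "nat (k + 1) = Suc (nat k)" by simp
  then show ?thesis using True by (simp add: gpow_def)
next
  case False
  then have "nat (- k) = Suc (nat (- (k + 1)))" by simp
  then show ?thesis using False by (simp add: gpow_def)
qed

lemma gpow_pred: "gpow g (k - 1) x = h (gpow g k x)"
  using gpow_succ[of "k - 1" x] by simp

lemma gpow_add: "gpow g a (gpow g b x) = gpow g (a + b) x"
proof (induction a rule: int_induct[where k=0])
  case base then show ?case by simp
next
  case (step1 i)
  then show ?case using gpow_succ[of i] gpow_succ[of "i + b"] by (simp add: algebra_simps)
next
  case (step2 i)
  then show ?case using gpow_pred[of i] gpow_pred[of "i + b"] by (simp add: algebra_simps)
qed

lemma gpow_inv[simp]: "gpow g (- k) (gpow g k x) = x" "gpow g k (gpow g (- k) x) = x"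
  using gpow_add[of "-k" k x] gpow_add[of k "-k" x] by simp_all

lemma gpow_1[simp]: "gpow g 1 = g" by (simp add: gpow_def fun_eq_iff)
lemma gpow_m1[simp]: "gpow g (-1) = h" by (simp add: gpow_def fun_eq_iff)

lemma gpow_period: assumes "g ^^ n = id" shows "gpow g (k + int n * q) x = gpow g k x"
proof -
  have pn: "gpow g (int n) = id" using assms by (simp add: gpow_def)
  have "gpow g (int n * q) x = x" for x
  proof (induction q arbitrary: x rule: int_induct[where k=0])
    case base then show ?case by simp
  next
    case (step1 i)
    have "gpow g (int n * (i + 1)) x = gpow g (int n * i) (gpow g (int n) x)"
      by (simp add: gpow_add algebra_simps)
    then show ?case using step1 pn by simp
  next
    case (step2 i)
    have "gpow g (int n * (i - 1)) x = gpow g (- int n) (gpow g (int n * i) x)"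
      by (simp add: gpow_add algebra_simps)
    also have "\<dots> = gpow g (- int n) x" using step2 by simp
    also have "\<dots> = gpow g (- int n) (gpow g (int n) x)" using pn by simp
    also have "\<dots> = x" by simp
    finally show ?case .
  qed
  then show ?thesis using gpow_add[of k "int n * q" x] by simp
qed


definition \<tau> where "\<tau> A c = (\<Sum>k\<in>A. gpow g (- k) c)"

lemma tau_R: "c \<in> R \<Longrightarrow> \<tau> A c \<in> R"
proof (cases "finite A")
  case True
  assume c: "c \<in> R"
  show ?thesis using True unfolding \<tau>_def
  proof (induction A rule: finite_induct)
    case empty then show ?case by simp
  next
    case (insert k F)
    then show ?case using gpow_good c R_add unfolding good_def by simp
  qed
next
  case False then show ?thesis by (simp add: \<tau>_def)
qed

lemma tau_img: "\<tau> A (\<gamma> x y) \<in> R" by (rule tau_R[OF img_R])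
lemma tau_rad: "\<tau> A (\<gamma> x y) \<in> Rad'" by (rule R_rad[OF tau_img])

lemma gpow_R: "x \<in> R \<Longrightarrow> gpow g k x \<in> R" using gpow_good unfolding good_def by blast
lemma gpow_rad: "x \<in> Rad' \<Longrightarrow> gpow g k x \<in> Rad'" using gpow_good unfolding good_def by blast
lemma gpow_add_rad: "r \<in> Rad' \<Longrightarrow> gpow g k (x + r) = gpow g k x + gpow g k r"
  using gpow_good unfolding good_def by blast
lemma gpow_add_mod: "gpow g k (a + b) - gpow g k a - gpow g k b \<in> R"
  using gpow_good unfolding good_def by blast
lemma gpow_zero[simp]: "gpow g k 0 = 0" using gpow_good unfolding good_def by blast
lemma gpow_minus_rad: "r \<in> Rad' \<Longrightarrow> gpow g k (- r) = - gpow g k r"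
  using gpow_add_rad[of r k "- r"] by (simp add: eq_neg_iff_add_eq_0)

lemma mult_eq: "sdp_mult n g \<gamma> (i, x) (j, y) =
   ((i + j) mod int n, gpow g (- j) x + y + \<tau> (Iset (i + j) (- j)) (\<gamma> x y))"
  by (simp add: sdp_mult_def \<tau>_def)

end

definition ex :: "nat \<Rightarrow> int \<Rightarrow> bool" where "ex n i \<longleftrightarrow> n = 0 \<or> (0 \<le> i \<and> i < int n)"

lemma carrier_iff[simp]: "(i, x) \<in> sdp_carrier n \<longleftrightarrow> ex n i"
  by (auto simp: sdp_carrier_def ex_def)
lemma ex_mod: "ex n i \<Longrightarrow> i mod int n = i"
  by (auto simp: ex_def)
lemma ex_modI: "ex n (i mod int n)"
  by (auto simp: ex_def)
lemma ex0: "ex n 0" by (auto simp: ex_def)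

locale cpH = cpair +
  fixes H :: "'a set"
  assumes RH: "R \<subseteq> H" and H0: "0 \<in> H" and Hdiff: "a \<in> H \<Longrightarrow> b \<in> H \<Longrightarrow> a - b \<in> H"
    and gH: "x \<in> H \<Longrightarrow> g x \<in> H" and hH: "x \<in> H \<Longrightarrow> h x \<in> H"
begin

lemma Hminus: "a \<in> H \<Longrightarrow> - a \<in> H" using Hdiff[OF H0] by simp
lemma Hadd: "a \<in> H \<Longrightarrow> b \<in> H \<Longrightarrow> a + b \<in> H" using Hdiff[OF _ Hminus] by (metis diff_minus_eq_add)
lemma RH': "a \<in> R \<Longrightarrow> a \<in> H" using RH by blast

lemma pow_H: "x \<in> H \<Longrightarrow> (f ^^ k) x \<in> H" if "\<And>y. y \<in> H \<Longrightarrow> f y \<in> H"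
  using that by (induction k) auto

lemma gpow_H: "x \<in> H \<Longrightarrow> gpow g k x \<in> H"
  unfolding gpow_def using pow_H gH hH by auto

lemma gpow_add_H: "s \<in> H \<Longrightarrow> gpow g k (x + s) - gpow g k x \<in> H"
proof -
  assume s: "s \<in> H"
  have "gpow g k (x + s) - gpow g k x = (gpow g k (x + s) - gpow g k x - gpow g k s) + gpow g k s"
    by simp
  then show ?thesis using Hadd RH' gpow_add_mod gpow_H[OF s] by metis
qed


end

locale loopH = cpH +
  fixes n :: nat
  assumes per: "n > 0 \<Longrightarrow> g ^^ n = id"
begin

abbreviation "mul \<equiv> sdp_mult n g \<gamma>"
abbreviation "NN \<equiv> {0::int} \<times> H"

definition cos where "cos i x = {(i, x + s) | s. s \<in> H}"

lemma cos_eq: "x - y \<in> H \<Longrightarrow> cos i x = cos i y"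
proof -
  assume d: "x - y \<in> H"
  have 1: "cos i x \<subseteq> cos i y" if "x - y \<in> H" for x y
  proof
    fix p assume "p \<in> cos i x"
    then obtain s where "s \<in> H" "p = (i, x + s)" by (auto simp: cos_def)
    then have "p = (i, y + ((x - y) + s))" "(x - y) + s \<in> H" using that Hadd by auto
    then show "p \<in> cos i y" unfolding cos_def by (metis (mono_tags, lifting) add.assoc mem_Collect_eq)
  qed
  show ?thesis using 1[OF d] 1[of y x] d Hminus by (metis minus_diff_eq subset_antisym)
qed

lemma lcoset_char: "ex n i \<Longrightarrow> lcoset mul (i, x) NN = cos i x"
proof -
  assume e: "ex n i"
  have m: "mul (i, x) (0, s) = (i, x + (s + \<tau> (Iset i 0) (\<gamma> x s)))" for s
    using ex_mod[OF e] by (simp add: mult_eq add.assoc)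
  show ?thesis
  proof (rule set_eqI, rule iffI)
    fix p assume "p \<in> lcoset mul (i, x) NN"
    then obtain s where "s \<in> H" "p = mul (i, x) (0, s)" by (auto simp: lcoset_def)
    then show "p \<in> cos i x" unfolding m cos_def using Hadd RH' tau_img by blast
  next
    fix p assume "p \<in> cos i x"
    then obtain t where t: "t \<in> H" "p = (i, x + t)" by (auto simp: cos_def)
    define s where "s = t - \<tau> (Iset i 0) (\<gamma> x t)"
    have sH: "s \<in> H" unfolding s_def using t Hdiff RH' tau_img by blast
    have "\<gamma> x s = \<gamma> x t" unfolding s_def using tau_rad by simp
    then have "mul (i, x) (0, s) = p" unfolding m t s_def by simp
    then show "p \<in> lcoset mul (i, x) NN" using sH by (auto simp: lcoset_def)
  qed
qed

lemma rcoset_char: "ex n i \<Longrightarrow> rcoset mul NN (i, x) = cos i x"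
proof -
  assume e: "ex n i"
  have m: "mul (0, s) (i, x) = (i, x + (gpow g (- i) s + \<tau> (Iset i (- i)) (\<gamma> s x)))" for s
    using ex_mod[OF e] by (simp add: mult_eq algebra_simps)
  show ?thesis
  proof (rule set_eqI, rule iffI)
    fix p assume "p \<in> rcoset mul NN (i, x)"
    then obtain s where "s \<in> H" "p = mul (0, s) (i, x)" by (auto simp: rcoset_def)
    then show "p \<in> cos i x" unfolding m cos_def using Hadd RH' tau_img gpow_H by blast
  next
    fix p assume "p \<in> cos i x"
    then obtain t where t: "t \<in> H" "p = (i, x + t)" by (auto simp: cos_def)
    define r where "r = \<tau> (Iset i (- i)) (\<gamma> (gpow g i t) x)"
    define s where "s = gpow g i (t - r)"
    have rR: "r \<in> R" unfolding r_def by (rule tau_img)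
    have sH: "s \<in> H" unfolding s_def using t Hdiff RH' rR gpow_H by blast
    have "s = gpow g i t + gpow g i (- r)" unfolding s_def
      using gpow_add_rad[of "- r" i t] rR R_rad R_minus by simp
    then have "\<gamma> s x = \<gamma> (gpow g i t) x" using gpow_rad[of "- r" i] rR R_rad R_minus by simp
    then have "mul (0, s) (i, x) = p" unfolding m t by (simp add: s_def r_def)
    then show "p \<in> rcoset mul NN (i, x)" using sH by (auto simp: rcoset_def)
  qed
qed


lemma cos_image:
  assumes "\<And>s. s \<in> H \<Longrightarrow> \<exists>u\<in>H. f (i, a + s) = (k, z + u)"
    and "\<And>t. t \<in> H \<Longrightarrow> \<exists>s\<in>H. f (i, a + s) = (k, z + t)"
  shows "f ` cos i a = cos k z"
proof (rule set_eqI, rule iffI)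
  fix p assume "p \<in> f ` cos i a"
  then obtain s where "s \<in> H" "p = f (i, a + s)" by (auto simp: cos_def)
  then show "p \<in> cos k z" using assms(1) by (force simp: cos_def)
next
  fix p assume "p \<in> cos k z"
  then obtain t where "t \<in> H" "p = (k, z + t)" by (auto simp: cos_def)
  then show "p \<in> f ` cos i a" using assms(2)[of t] by (force simp: cos_def)
qed

lemma mul_closed: "p \<in> sdp_carrier n \<Longrightarrow> q \<in> sdp_carrier n \<Longrightarrow> mul p q \<in> sdp_carrier n"
  by (cases p; cases q) (simp add: mult_eq ex_modI)

lemma normal: "normal_subloop (sdp_carrier n) mul sdp_one NN"
proof -
  have sub: "subloop (sdp_carrier n) mul sdp_one NN"
    unfolding subloop_def
  proof (intro conjI ballI allI impI)
    show "NN \<subseteq> sdp_carrier n" using ex0 by auto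
    show "sdp_one \<in> NN" using H0 by (simp add: sdp_one_def)
  next
    fix p q assume "p \<in> NN" "q \<in> NN"
    then show "mul p q \<in> NN" by (auto simp: mult_eq Iset_def \<tau>_def intro: Hadd)
  next
    fix p q and x :: "int \<times> 'a" assume p: "p \<in> NN" and q: "q \<in> NN" and x: "x \<in> sdp_carrier n"
    obtain a where pa: "p = (0, a)" "a \<in> H" using p by auto
    obtain b where qb: "q = (0, b)" "b \<in> H" using q by auto
    obtain j y where xj: "x = (j, y)" "ex n j" using x by (cases x) auto
    {
      assume "mul p x = q"
      then have "j = 0" "a + y = b" using ex_mod[OF xj(2)] by (auto simp: pa qb xj mult_eq Iset_def \<tau>_def)
      then have "y = b - a" by (metis add_diff_cancel_left')
      then show "x \<in> NN" using \<open>j = 0\<close> xj pa qb Hdiff[of b a] by simp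
    }
    {
      assume "mul x p = q"
      then have "j = 0" "y + a = b" using ex_mod[OF xj(2)] by (auto simp: pa qb xj mult_eq Iset_def \<tau>_def)
      then have "y = b - a" by (metis add_diff_cancel_right')
      then show "x \<in> NN" using \<open>j = 0\<close> xj pa qb Hdiff[of b a] by simp
    }
  qed
  have b: "(\<lambda>n0. mul (mul n0 x) y) ` NN = rcoset mul NN (mul x y)"
    if x: "x \<in> sdp_carrier n" and y: "y \<in> sdp_carrier n" for x y
  proof -
    obtain i a where xi: "x = (i, a)" "ex n i" using x by (cases x) auto
    obtain j b where yj: "y = (j, b)" "ex n j" using y by (cases y) auto
    define k where "k = (i + j) mod int n"
    define I where "I = Iset (i + j) (- j)"
    define z where "z = gpow g (- j) a + b + \<tau> I (\<gamma> a b)"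
    have mxy: "mul x y = (k, z)" by (simp add: xi yj mult_eq k_def z_def I_def)
    have ek: "ex n k" unfolding k_def by (rule ex_modI)
    have m: "mul (i, a + s) (j, b) = (k, gpow g (- j) (a + s) + b + \<tau> I (\<gamma> (a + s) b))" for s
      by (simp add: mult_eq k_def I_def)
    have "(\<lambda>n0. mul (mul n0 x) y) ` NN = (\<lambda>p. mul p y) ` rcoset mul NN x"
      by (simp add: rcoset_def image_image)
    also have "\<dots> = (\<lambda>p. mul p y) ` cos i a" using rcoset_char[OF xi(2)] xi by simp
    also have "\<dots> = cos k z"
    proof (rule cos_image)
      fix s assume s: "s \<in> H"
      have e: "gpow g (- j) (a + s) + b + \<tau> I (\<gamma> (a + s) b) = z +
         ((gpow g (- j) (a + s) - gpow g (- j) a) + (\<tau> I (\<gamma> (a + s) b) - \<tau> I (\<gamma> a b)))"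
        by (simp add: z_def algebra_simps)
      have "(gpow g (- j) (a + s) - gpow g (- j) a) + (\<tau> I (\<gamma> (a + s) b) - \<tau> I (\<gamma> a b)) \<in> H"
        by (intro Hadd gpow_add_H[OF s] Hdiff RH' tau_img)
      moreover have "mul (i, a + s) y = (k, z + ((gpow g (- j) (a + s) - gpow g (- j) a) + (\<tau> I (\<gamma> (a + s) b) - \<tau> I (\<gamma> a b))))"
        unfolding yj m e ..
      ultimately show "\<exists>u\<in>H. mul (i, a + s) y = (k, z + u)" by blast
    next
      fix t assume t: "t \<in> H"
      define w where "w = gpow g (- j) a"
      define s0 where "s0 = gpow g j (w + t) - a"
      define r0 where "r0 = \<tau> I (\<gamma> (a + s0) b) - \<tau> I (\<gamma> a b)"
      define s where "s = gpow g j (w + t - r0) - a"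
      have r0R: "r0 \<in> R" unfolding r0_def using tau_img R_diff by blast
      have aw: "a = gpow g j w" by (simp add: w_def)
      have s0H: "s0 \<in> H" unfolding s0_def aw using gpow_add_H[OF t] by simp
      have e1: "gpow g j (w + t - r0) = gpow g j (w + t) + gpow g j (- r0)"
        using gpow_add_rad[of "- r0" j "w + t"] r0R R_rad R_minus by simp
      have s_eq: "s = s0 + gpow g j (- r0)" unfolding s_def s0_def e1 by simp
      have sH: "s \<in> H" unfolding s_eq by (intro Hadd s0H RH' gpow_R R_minus r0R)
      have "\<gamma> (a + s) b = \<gamma> (a + s0) b" unfolding s_eq
        using gpow_rad[of "- r0" j] r0R R_rad R_minus by (simp add: add.assoc[symmetric])
      moreover have "gpow g (- j) (a + s) = w + t - r0" unfolding s_def by simp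
      ultimately have "mul (i, a + s) y = (k, z + t)" unfolding m yj
        by (simp add: z_def r0_def w_def algebra_simps)
      then show "\<exists>s\<in>H. mul (i, a + s) y = (k, z + t)" using sH by blast
    qed
    also have "\<dots> = rcoset mul NN (mul x y)" using rcoset_char[OF ek] mxy by simp
    finally show ?thesis .
  qed
  have c: "(\<lambda>n0. mul y (mul x n0)) ` NN = lcoset mul (mul y x) NN"
    if x: "x \<in> sdp_carrier n" and y: "y \<in> sdp_carrier n" for x y
  proof -
    obtain i a where xi: "x = (i, a)" "ex n i" using x by (cases x) auto
    obtain j b where yj: "y = (j, b)" "ex n j" using y by (cases y) auto
    define k where "k = (j + i) mod int n"
    define I where "I = Iset (j + i) (- i)"
    define z where "z = gpow g (- i) b + a + \<tau> I (\<gamma> b a)"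
    have myx: "mul y x = (k, z)" by (simp add: xi yj mult_eq k_def z_def I_def)
    have ek: "ex n k" unfolding k_def by (rule ex_modI)
    have m: "mul (j, b) (i, a + s) = (k, z + (s + (\<tau> I (\<gamma> b (a + s)) - \<tau> I (\<gamma> b a))))" for s
      by (simp add: mult_eq k_def I_def z_def algebra_simps)
    have "(\<lambda>n0. mul y (mul x n0)) ` NN = (\<lambda>p. mul y p) ` lcoset mul x NN"
      by (simp add: lcoset_def image_image)
    also have "\<dots> = (\<lambda>p. mul y p) ` cos i a" using lcoset_char[OF xi(2)] xi by simp
    also have "\<dots> = cos k z"
    proof (rule cos_image)
      fix s assume s: "s \<in> H"
      have "s + (\<tau> I (\<gamma> b (a + s)) - \<tau> I (\<gamma> b a)) \<in> H"
        by (intro Hadd s Hdiff RH' tau_img)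
      then show "\<exists>u\<in>H. mul y (i, a + s) = (k, z + u)" unfolding yj m by blast
    next
      fix t assume t: "t \<in> H"
      define r where "r = \<tau> I (\<gamma> b (a + t)) - \<tau> I (\<gamma> b a)"
      define s where "s = t - r"
      have rR: "r \<in> R" unfolding r_def using tau_img R_diff by blast
      have sH: "s \<in> H" unfolding s_def using t rR RH' Hdiff by blast
      have "\<gamma> b (a + s) = \<gamma> b (a + t)" unfolding s_def using rR R_rad
        by (simp add: add_diff_eq[symmetric])
      then have "mul y (i, a + s) = (k, z + t)" unfolding m yj by (simp add: s_def r_def)
      then show "\<exists>s\<in>H. mul y (i, a + s) = (k, z + t)" using sH by blast
    qed
    also have "\<dots> = lcoset mul (mul y x) NN" using lcoset_char[OF ek] myx by simp
    finally show ?thesis .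
  qed
  have a: "lcoset mul x NN = rcoset mul NN x" if x: "x \<in> sdp_carrier n" for x
    using x lcoset_char rcoset_char by (cases x) simp
  show ?thesis unfolding normal_subloop_def
  proof (intro conjI ballI)
    show "subloop (sdp_carrier n) mul sdp_one NN" by (rule sub)
  next
    fix x y :: "int \<times> 'a" assume x: "x \<in> sdp_carrier n" and y: "y \<in> sdp_carrier n"
    show "lcoset mul x NN = rcoset mul NN x" by (rule a[OF x])
    show "(\<lambda>n0. mul (mul n0 x) y) ` NN = rcoset mul NN (mul x y)" by (rule b[OF x y])
    show "(\<lambda>n0. mul y (mul x n0)) ` NN = lcoset mul (mul y x) NN" by (rule c[OF x y])
  qed
qed


lemma gq: "gpow g (- l) (gpow g (- j) a) = gpow g (- ((j + l) mod int n)) a"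
proof (cases "n = 0")
  case True then show ?thesis by (simp add: gpow_add add.commute)
next
  case False
  have p: "g ^^ n = id" using per False by simp
  have "- (j + l) = - ((j + l) mod int n) + int n * (- ((j + l) div int n))"
    using div_mult_mod_eq[of "j + l" "int n"] by (simp add: algebra_simps)
  then have "gpow g (- (j + l)) a = gpow g (- ((j + l) mod int n)) a"
    using gpow_period[OF p, of "- ((j + l) mod int n)" "- ((j + l) div int n)" a] by simp
  then show ?thesis by (simp add: gpow_add add.commute)
qed

lemma assoc: "quot_associative (sdp_carrier n) mul NN"
  unfolding quot_associative_def
proof (intro ballI)
  fix x y z :: "int \<times> 'a"
  assume x: "x \<in> sdp_carrier n" and y: "y \<in> sdp_carrier n" and z: "z \<in> sdp_carrier n"
  obtain i a where xi: "x = (i, a)" using x by (cases x) auto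
  obtain j b where yj: "y = (j, b)" using y by (cases y) auto
  obtain l c where zl: "z = (l, c)" using z by (cases z) auto
  define u1 where "u1 = gpow g (- j) a + b + \<tau> (Iset (i + j) (- j)) (\<gamma> a b)"
  define u3 where "u3 = gpow g (- l) b + c + \<tau> (Iset (j + l) (- l)) (\<gamma> b c)"
  define k1 where "k1 = ((i + j) mod int n + l) mod int n"
  define k2 where "k2 = (i + (j + l) mod int n) mod int n"
  define v1 where "v1 = gpow g (- l) u1 + c + \<tau> (Iset ((i + j) mod int n + l) (- l)) (\<gamma> u1 c)"
  define v2 where "v2 = gpow g (- ((j + l) mod int n)) a + u3 + \<tau> (Iset (i + (j + l) mod int n) (- ((j + l) mod int n))) (\<gamma> a u3)"
  have e1: "mul (mul x y) z = (k1, v1)" by (simp add: xi yj zl mult_eq u1_def k1_def v1_def)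
  have e2: "mul x (mul y z) = (k2, v2)" by (simp add: xi yj zl mult_eq u3_def k2_def v2_def)
  have kk: "k1 = k2" unfolding k1_def k2_def by (simp add: mod_add_left_eq mod_add_right_eq add.assoc)
  define t1 where "t1 = \<tau> (Iset (i + j) (- j)) (\<gamma> a b)"
  have t1R: "t1 \<in> R" unfolding t1_def by (rule tau_img)
  have A: "gpow g (- l) u1 = gpow g (- l) (gpow g (- j) a + b) + gpow g (- l) t1"
    unfolding u1_def t1_def[symmetric] using gpow_add_rad[OF R_rad[OF t1R]] by simp
  have "v1 - v2 = gpow g (- l) t1 + (gpow g (- l) (gpow g (- j) a + b) - gpow g (- l) (gpow g (- j) a) - gpow g (- l) b)
     + (\<tau> (Iset ((i + j) mod int n + l) (- l)) (\<gamma> u1 c) - \<tau> (Iset (j + l) (- l)) (\<gamma> b c)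
        - \<tau> (Iset (i + (j + l) mod int n) (- ((j + l) mod int n))) (\<gamma> a u3))"
    unfolding v1_def v2_def A gq[symmetric] u3_def by (simp add: algebra_simps)
  moreover have "\<dots> \<in> R"
    by (intro R_add R_diff gpow_R t1R gpow_add_mod tau_img)
  ultimately have "v1 - v2 \<in> H" using RH' by simp
  then show "lcoset mul (mul (mul x y) z) NN = lcoset mul (mul x (mul y z)) NN"
    unfolding e1 e2 using lcoset_char[OF ex_modI[of n "(i + j) mod int n + l"]]
      lcoset_char[OF ex_modI[of n "i + (j + l) mod int n"]] cos_eq kk k1_def k2_def by metis
qed

lemma pow_disp: "(\<And>y. f y - y \<in> H) \<Longrightarrow> (f ^^ k) x - x \<in> H"
proof (induction k)
  case 0 then show ?case using H0 by simp
next
  case (Suc k)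
  have "(f ^^ Suc k) x - x = (f ((f ^^ k) x) - (f ^^ k) x) + ((f ^^ k) x - x)" by simp
  then show ?case using Suc Hadd by metis
qed

lemma comm: assumes d: "\<And>x. x - g x \<in> H" shows "quot_commutative (sdp_carrier n) mul NN"
  unfolding quot_commutative_def
proof (intro ballI)
  have dg: "g y - y \<in> H" for y using Hminus[OF d[of y]] by simp
  have dh: "h y - y \<in> H" for y using d[of "h y"] by simp
  have dG: "gpow g k y - y \<in> H" for k y
    unfolding gpow_def using pow_disp[OF dg] pow_disp[OF dh] by simp
  fix x y :: "int \<times> 'a"
  assume x: "x \<in> sdp_carrier n" and y: "y \<in> sdp_carrier n"
  obtain i a where xi: "x = (i, a)" using x by (cases x) auto
  obtain j b where yj: "y = (j, b)" using y by (cases y) auto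
  define v1 where "v1 = gpow g (- j) a + b + \<tau> (Iset (i + j) (- j)) (\<gamma> a b)"
  define v2 where "v2 = gpow g (- i) b + a + \<tau> (Iset (j + i) (- i)) (\<gamma> b a)"
  have e1: "mul x y = ((i + j) mod int n, v1)" by (simp add: xi yj mult_eq v1_def)
  have e2: "mul y x = ((i + j) mod int n, v2)" by (simp add: xi yj mult_eq v2_def add.commute)
  have "v1 - v2 = (gpow g (- j) a - a) - (gpow g (- i) b - b) + (\<tau> (Iset (i + j) (- j)) (\<gamma> a b) - \<tau> (Iset (j + i) (- i)) (\<gamma> b a))"
    unfolding v1_def v2_def by (simp add: algebra_simps)
  moreover have "\<dots> \<in> H" by (intro Hadd Hdiff dG RH' tau_img)
  ultimately have "v1 - v2 \<in> H" by simp
  then show "lcoset mul (mul x y) NN = lcoset mul (mul y x) NN"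
    unfolding e1 e2 using lcoset_char[OF ex_modI[of n "i + j"]] cos_eq by metis
qed


end

context cpair
begin

lemma gamma_h2[simp]: "\<gamma> y (h x) = g (\<gamma> x y)" using gamma_h gsym by metis
lemma gamma_gg1[simp]: "\<gamma> (g (\<gamma> a b)) x = 0" using rad_g[of "\<gamma> a b"] R_rad img_R by simp
lemma gamma_gg2[simp]: "\<gamma> x (g (\<gamma> a b)) = 0" using rad_g[of "\<gamma> a b"] R_rad img_R by simp

lemma gamma_2[simp]: "\<gamma> x y + \<gamma> x y = 0"
proof -
  have "\<gamma> (x + y) (x + y) = \<gamma> x y + \<gamma> x y"
    by (simp only: gaddl gaddr galt[of x] galt[of y] gsym[of y x] add_0 add_0_right)
  then show ?thesis by simp
qed
lemma gneg[simp]: "- \<gamma> x y = \<gamma> x y"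
  using gamma_2[of x y] by (metis eq_neg_iff_add_eq_0)

lemma tau0[simp]: "\<tau> A 0 = 0" by (simp add: \<tau>_def)

lemma mul_one: "ex n i \<Longrightarrow> sdp_mult n g \<gamma> (i, x) (0, 0) = (i, x)"
  by (simp add: mult_eq ex_mod)

lemma mul00: "sdp_mult n g \<gamma> (0, a) (0, b) = (0, a + b)"
  by (simp add: mult_eq Iset_def \<tau>_def)

lemma ex1: "n \<noteq> 1 \<Longrightarrow> ex n 1" by (auto simp: ex_def)
lemma mod1: "n \<noteq> 1 \<Longrightarrow> 1 mod int n = 1" by (cases "n = 0") auto

lemma j0: "ex n j \<Longrightarrow> n \<noteq> 1 \<Longrightarrow> (1 + j) mod int n = 1 \<Longrightarrow> j = 0"
proof (cases "n = 0")
  case True then show "ex n j \<Longrightarrow> n \<noteq> 1 \<Longrightarrow> (1 + j) mod int n = 1 \<Longrightarrow> j = 0" by simp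
next
  case False
  assume e: "ex n j" and n1: "n \<noteq> 1" and m: "(1 + j) mod int n = 1"
  have j: "0 \<le> j" "j < int n" using e False by (auto simp: ex_def)
  show "j = 0"
  proof (cases "1 + j < int n")
    case True
    then have "(1 + j) mod int n = 1 + j" using j by simp
    then show ?thesis using m by simp
  next
    case False
    then have "1 + j = int n" using j by simp
    then show ?thesis using m by simp
  qed
qed

lemma extractM:
  assumes sub: "subloop (sdp_carrier n) (sdp_mult n g \<gamma>) sdp_one M" and n1: "n \<noteq> 1"
    and eq: "lcoset (sdp_mult n g \<gamma>) (1, q) M = lcoset (sdp_mult n g \<gamma>) (1, p) M"
  shows "\<exists>u. (0, u) \<in> M \<and> q = p + u + \<gamma> p u"
proof -
  have o: "(0, 0) \<in> M" using sub by (simp add: subloop_def sdp_one_def)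
  have "(1, q) = sdp_mult n g \<gamma> (1, q) (0, 0)" using mul_one[OF ex1[OF n1]] by simp
  then have "(1, q) \<in> lcoset (sdp_mult n g \<gamma>) (1, q) M"
    unfolding lcoset_def using o by (rule rev_image_eqI[rotated])
  then have "(1, q) \<in> lcoset (sdp_mult n g \<gamma>) (1, p) M" using eq by simp
  then obtain j u where ju: "(j, u) \<in> M" "sdp_mult n g \<gamma> (1, p) (j, u) = (1, q)"
    unfolding lcoset_def by auto
  have "M \<subseteq> sdp_carrier n" using sub by (simp add: subloop_def)
  then have e: "ex n j" using ju(1) by auto
  have md: "(1 + j) mod int n = 1" using ju(2) by (simp add: mult_eq)
  have j: "j = 0" by (rule j0[OF e n1 md])
  have "Iset 1 0 = {0}" by (simp add: Iset_def)
  then have "q = p + u + \<gamma> p u" using ju(2) j by (simp add: mult_eq \<tau>_def)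
  then show ?thesis using ju(1) j by blast
qed

lemma sub_divl: "subloop Q m e N \<Longrightarrow> a \<in> N \<Longrightarrow> b \<in> N \<Longrightarrow> x \<in> Q \<Longrightarrow> m a x = b \<Longrightarrow> x \<in> N"
  unfolding subloop_def by blast
lemma sub_mul: "subloop Q m e N \<Longrightarrow> a \<in> N \<Longrightarrow> b \<in> N \<Longrightarrow> m a b \<in> N"
  unfolding subloop_def by blast

lemma MX_closure:
  assumes sub: "subloop (sdp_carrier n) (sdp_mult n g \<gamma>) sdp_one M"
    and S: "\<And>s. s \<in> S \<Longrightarrow> (0, s) \<in> M"
  shows "{0} \<times> group_closure S \<subseteq> M"
proof -
  have one: "(0, 0) \<in> M" using sub by (simp add: subloop_def sdp_one_def)
  have "(0, s) \<in> M" if "s \<in> group_closure S" for s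
    using that
  proof (induction rule: group_closure.induct)
    case (base s) then show ?case using one S by auto
  next
    case (diff s t)
    have "(0, - t) \<in> sdp_carrier n" by (simp add: ex0)
    moreover have "sdp_mult n g \<gamma> (0, t) (0, - t) = (0, 0)" by (simp add: mul00)
    ultimately have "(0, - t) \<in> M" using sub_divl[OF sub diff(4) one] by blast
    then have "sdp_mult n g \<gamma> (0, s) (0, - t) \<in> M" using sub_mul[OF sub diff(3)] by blast
    then show ?case by (simp add: mul00)
  qed
  then show ?thesis by auto
qed

lemma MX_minus:
  assumes sub: "subloop (sdp_carrier n) (sdp_mult n g \<gamma>) sdp_one M" and t: "(0, t) \<in> M"
  shows "(0, - t) \<in> M"
proof -
  have one: "(0, 0) \<in> M" using sub by (simp add: subloop_def sdp_one_def)
  have "(0, - t) \<in> sdp_carrier n" by (simp add: ex0)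
  moreover have "sdp_mult n g \<gamma> (0, t) (0, - t) = (0, 0)" by (simp add: mul00)
  ultimately show "(0, - t) \<in> M" using sub_divl[OF sub t one] by blast
qed

lemma MX_diff:
  assumes sub: "subloop (sdp_carrier n) (sdp_mult n g \<gamma>) sdp_one M" and "(0, s) \<in> M" "(0, t) \<in> M"
  shows "(0, s - t) \<in> M"
proof -
  have "sdp_mult n g \<gamma> (0, s) (0, - t) \<in> M" using sub_mul[OF sub assms(2) MX_minus[OF sub assms(3)]] .
  then show ?thesis by (simp add: mul00)
qed

lemma min_assoc:
  assumes M: "normal_subloop (sdp_carrier n) (sdp_mult n g \<gamma>) sdp_one M"
    and A: "quot_associative (sdp_carrier n) (sdp_mult n g \<gamma>) M" and n1: "n \<noteq> 1"
  shows "{0} \<times> group_closure (Img \<gamma>) \<subseteq> M"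
proof -
  have sub: "subloop (sdp_carrier n) (sdp_mult n g \<gamma>) sdp_one M" using M by (simp add: normal_subloop_def)
  have "(0, \<gamma> c b) \<in> M" for b c
  proof -
    have I: "Iset 1 0 = {0}" "Iset 0 0 = {}" by (simp_all add: Iset_def)
    have "(1, - (b + c)) \<in> sdp_carrier n" "(0, b) \<in> sdp_carrier n" "(0, c) \<in> sdp_carrier n"
      using ex1[OF n1] ex0 by auto
    then have "lcoset (sdp_mult n g \<gamma>) (sdp_mult n g \<gamma> (sdp_mult n g \<gamma> (1, - (b + c)) (0, b)) (0, c)) M
        = lcoset (sdp_mult n g \<gamma>) (sdp_mult n g \<gamma> (1, - (b + c)) (sdp_mult n g \<gamma> (0, b) (0, c))) M"
      using A unfolding quot_associative_def by blast
    moreover have "sdp_mult n g \<gamma> (sdp_mult n g \<gamma> (1, - (b + c)) (0, b)) (0, c) = (1, - \<gamma> c b)"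
      using I by (simp add: mult_eq mod1[OF n1] \<tau>_def gsym[of b c])
    moreover have "sdp_mult n g \<gamma> (1, - (b + c)) (sdp_mult n g \<gamma> (0, b) (0, c)) = (1, 0)"
      using I by (simp add: mult_eq mod1[OF n1] \<tau>_def gsym[of b c])
    ultimately have "lcoset (sdp_mult n g \<gamma>) (1, - \<gamma> c b) M = lcoset (sdp_mult n g \<gamma>) (1, 0) M" by simp
    from extractM[OF sub n1 this] obtain u where "(0, u) \<in> M" "- \<gamma> c b = u" by auto
    then show ?thesis using MX_minus[OF sub] by fastforce
  qed
  then show ?thesis by (intro MX_closure[OF sub]) (auto simp: Img_def)
qed

lemma min_comm:
  assumes M: "normal_subloop (sdp_carrier n) (sdp_mult n g \<gamma>) sdp_one M"
    and C: "quot_commutative (sdp_carrier n) (sdp_mult n g \<gamma>) M" and n1: "n \<noteq> 1"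
  shows "{0} \<times> group_closure (Img \<gamma> \<union> {x - g x | x. True}) \<subseteq> M"
proof -
  have sub: "subloop (sdp_carrier n) (sdp_mult n g \<gamma>) sdp_one M" using M by (simp add: normal_subloop_def)
  have key: "(0, h b - b - \<gamma> a b) \<in> M" for a b
  proof -
    have I: "Iset 1 0 = {0}" "Iset 1 (- 1) = {-1, 0}" by (auto simp: Iset_def)
    define p where "p = a + b + \<gamma> a b"
    define q where "q = h b + a + g (\<gamma> a b) + \<gamma> a b"
    have "(1, a) \<in> sdp_carrier n" "(0, b) \<in> sdp_carrier n" using ex1[OF n1] ex0 by auto
    then have "lcoset (sdp_mult n g \<gamma>) (sdp_mult n g \<gamma> (1, a) (0, b)) M
        = lcoset (sdp_mult n g \<gamma>) (sdp_mult n g \<gamma> (0, b) (1, a)) M"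
      using C unfolding quot_commutative_def by blast
    moreover have "sdp_mult n g \<gamma> (1, a) (0, b) = (1, p)"
      using I by (simp add: mult_eq mod1[OF n1] \<tau>_def p_def)
    moreover have "sdp_mult n g \<gamma> (0, b) (1, a) = (1, q)"
      using I by (simp add: mult_eq mod1[OF n1] \<tau>_def q_def gsym[of b a] algebra_simps)
    ultimately have "lcoset (sdp_mult n g \<gamma>) (1, q) M = lcoset (sdp_mult n g \<gamma>) (1, p) M" by simp
    from extractM[OF sub n1 this] obtain u where u: "(0, u) \<in> M" "q = p + u + \<gamma> p u" by auto
    have "\<gamma> p q = \<gamma> p u" using u(2) by simp
    then have "u = q - p - \<gamma> p q" using u(2) by (simp add: algebra_simps)
    also have "\<dots> = h b - b - \<gamma> a b"
      unfolding p_def q_def by (simp add: gsym[of b a] algebra_simps)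
    finally show ?thesis using u(1) by simp
  qed
  have hb: "(0, h b - b) \<in> M" for b using key[where a=0 and b=b] by simp
  have G: "(0, \<gamma> a b) \<in> M" for a b
    using MX_diff[OF sub hb[of b] key[where a=a and b=b]] by simp
  have D: "(0, x - g x) \<in> M" for x using hb[of "g x"] by simp
  show ?thesis by (intro MX_closure[OF sub]) (auto simp: Img_def G D)
qed


lemma map_closure:
  assumes add: "\<And>a b. f (a + b) - f a - f b \<in> R" and f0: "f 0 = 0"
    and RS: "R \<subseteq> group_closure S" and gen: "\<And>s. s \<in> S \<Longrightarrow> f s \<in> group_closure S"
  shows "x \<in> group_closure S \<Longrightarrow> f x \<in> group_closure S"
proof (induction rule: group_closure.induct)
  case (base s) then show ?case using f0 gen by auto
next
  case (diff s t)
  have "f s - f (s - t) - f t \<in> R" using add[of "s - t" t] by simp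
  then have r: "f s - f (s - t) - f t \<in> group_closure S" using RS by blast
  have "f (s - t) = f s - f t - (f s - f (s - t) - f t)" by simp
  then show ?case using diff r by (metis group_closure.diff)
qed

lemma least_prop:
  assumes e: "(if \<exists>r>0. P r then LEAST r::nat. r > 0 \<and> P r else 0) = c" and c: "c \<noteq> 0"
  shows "P c"
proof (cases "\<exists>r>0. P r")
  case True
  then have l: "(LEAST r::nat. r > 0 \<and> P r) = c" using e by (simp only: if_True)
  have "(LEAST r::nat. r > 0 \<and> P r) > 0 \<and> P (LEAST r::nat. r > 0 \<and> P r)"
    by (rule LeastI_ex) (rule True)
  then show ?thesis unfolding l by blast
next
  case False
  then have "c = 0" using e by (simp only: if_False)
  then show ?thesis using c by blast
qed

end

lemma id_funpow: "(id ^^ c) = id" by (induction c) auto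

theorem mainTheorem6:
  fixes g :: "'a::ab_group_add \<Rightarrow> 'a" and \<gamma> :: "'a \<Rightarrow> 'a \<Rightarrow> 'a" and n :: nat
  assumes "construction_pair g \<gamma>"
    and "n > 0 \<Longrightarrow> perm_order g dvd n \<and> r_const g \<gamma> dvd n"
  defines "Q \<equiv> sdp_carrier n" and "m \<equiv> sdp_mult n g \<gamma>"
  shows "is_associator_subloop Q m sdp_one ({0} \<times> group_closure (Img \<gamma>))
       \<and> is_commutator_subloop Q m sdp_one ({0} \<times> group_closure (Img \<gamma> \<union> {x - g x | x. True}))
       \<and> is_derived_subloop Q m sdp_one ({0} \<times> group_closure (Img \<gamma> \<union> {x - g x | x. True}))
       \<and> {0} \<times> group_closure (Img \<gamma>) \<subseteq> {0} \<times> group_closure (Img \<gamma> \<union> {x - g x | x. True})"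
proof -
  interpret cpair g \<gamma> by (rule cpair.intro) (rule assms(1))
  define D where "D = {x - g x | x. True}"
  define S where "S = group_closure (Img \<gamma> \<union> D)"
  have per: "g ^^ n = id" if "n > 0"
  proof -
    have d: "perm_order g dvd n" using assms(2) that by blast
    have p0: "perm_order g \<noteq> 0" using d that by (auto)
    have "g ^^ perm_order g = id"
      using least_prop[of "\<lambda>m. g ^^ m = id" "perm_order g"] p0 by (simp add: perm_order_def)
    moreover obtain c where "n = perm_order g * c" using d by blast
    ultimately show ?thesis by (simp add: funpow_mult[symmetric] id_funpow)
  qed
  have RS: "R \<subseteq> S" unfolding R_def S_def
  proof
    fix x assume "x \<in> group_closure (Img \<gamma>)"
    then show "x \<in> group_closure (Img \<gamma> \<union> D)"
      by (induction rule: group_closure.induct) (auto intro: group_closure.intros)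
  qed
  have DS: "x - g x \<in> S" for x unfolding S_def D_def by (auto intro: group_closure.base)
  have gS: "x \<in> S \<Longrightarrow> g x \<in> S" for x
  proof -
    assume x: "x \<in> S"
    have gen: "g s \<in> S" if "s \<in> Img \<gamma> \<union> D" for s
    proof -
      { assume "s \<in> Img \<gamma>" then have ?thesis using g_R R_def RS by (auto intro: group_closure.base) }
      moreover
      { assume "s \<in> D"
        then obtain y where y: "s = y - g y" by (auto simp: D_def)
        have "g y - g (y - g y) - g (g y) \<in> R" using g_add_mod[of "y - g y" "g y"] by simp
        then have r: "g y - g (y - g y) - g (g y) \<in> S" using RS by blast
        have "g s = (g y - g (g y)) - (g y - g (y - g y) - g (g y))" using y by simp
        then have ?thesis using DS[of "g y"] r S_def by (metis group_closure.diff) }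
      ultimately show ?thesis using that by blast
    qed
    show ?thesis using map_closure[of g "Img \<gamma> \<union> D" x] g_add_mod RS gen x unfolding S_def by simp
  qed
  have hS: "x \<in> S \<Longrightarrow> h x \<in> S" for x
  proof -
    assume x: "x \<in> S"
    have gen: "h s \<in> S" if "s \<in> Img \<gamma> \<union> D" for s
    proof -
      { assume "s \<in> Img \<gamma>" then have ?thesis using h_R R_def RS by (auto intro: group_closure.base) }
      moreover
      { assume "s \<in> D"
        then obtain y where y: "s = y - g y" by (auto simp: D_def)
        have "h y - h (y - g y) - h (g y) \<in> R" using h_add_mod[of "y - g y" "g y"] by simp
        then have r: "h y - h (y - g y) - y \<in> S" using RS by auto
        have "h s = (h y - g (h y)) - (h y - h (y - g y) - y)" using y by simp
        then have ?thesis using DS[of "h y"] r S_def by (metis group_closure.diff) }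
      ultimately show ?thesis using that by blast
    qed
    show ?thesis using map_closure[of h "Img \<gamma> \<union> D" x] h_add_mod RS gen x unfolding S_def by simp
  qed
  interpret LR: loopH g \<gamma> R n
    by unfold_locales (auto simp: R_def per intro: g_R[unfolded R_def] h_R[unfolded R_def] group_closure.diff)
  interpret LS: loopH g \<gamma> S n
    using RS gS hS by unfold_locales (auto simp: per S_def intro: group_closure.diff)
  have minA: "{0} \<times> R \<subseteq> M" if "normal_subloop Q m sdp_one M" "quot_associative Q m M" for M
  proof (cases "n = 1")
    case False then show ?thesis using min_assoc that unfolding Q_def m_def R_def by blast
  next
    case True
    have "r_const g \<gamma> dvd 1" using assms(2) True by simp
    then have "r_const g \<gamma> = 1" by simp
    then have "\<forall>x. (\<Sum>k<1. (g ^^ k) x) \<in> Rad \<gamma>"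
      using least_prop[of "\<lambda>r. \<forall>x. (\<Sum>k<r. (g ^^ k) x) \<in> Rad \<gamma>" 1] by (simp add: r_const_def)
    then have "\<gamma> x y = 0" for x y by (simp add: Rad_def)
    then have "Img \<gamma> = {0}" by (auto simp: Img_def)
    then have "R = {0}" unfolding R_def by (metis group_closure_empty group_closure_insert_zero)
    moreover have "(0, 0) \<in> M" using that(1) by (simp add: normal_subloop_def subloop_def sdp_one_def)
    ultimately show ?thesis by auto
  qed
  have minC: "{0} \<times> S \<subseteq> M" if "normal_subloop Q m sdp_one M" "quot_commutative Q m M" for M
  proof (cases "n = 1")
    case False then show ?thesis using min_comm that unfolding Q_def m_def S_def D_def by blast
  next
    case True
    have "r_const g \<gamma> dvd 1" using assms(2) True by simp
    then have "r_const g \<gamma> = 1" by simp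
    then have "\<forall>x. (\<Sum>k<1. (g ^^ k) x) \<in> Rad \<gamma>"
      using least_prop[of "\<lambda>r. \<forall>x. (\<Sum>k<r. (g ^^ k) x) \<in> Rad \<gamma>" 1] by (simp add: r_const_def)
    then have "\<gamma> x y = 0" for x y by (simp add: Rad_def)
    then have I: "Img \<gamma> = {0}" by (auto simp: Img_def)
    have "perm_order g dvd 1" using assms(2) True by simp
    then have "perm_order g = 1" by simp
    then have "g ^^ 1 = id" using least_prop[of "\<lambda>m. g ^^ m = id" 1] by (simp add: perm_order_def)
    then have "D = {0}" by (auto simp: D_def)
    then have "S = {0}" unfolding S_def I by (metis Un_absorb group_closure_empty group_closure_insert_zero)
    moreover have "(0, 0) \<in> M" using that(1) by (simp add: normal_subloop_def subloop_def sdp_one_def)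
    ultimately show ?thesis by auto
  qed
  have nR: "normal_subloop Q m sdp_one ({0} \<times> R)" unfolding Q_def m_def by (rule LR.normal)
  have aR: "quot_associative Q m ({0} \<times> R)" unfolding Q_def m_def by (rule LR.assoc)
  have nS: "normal_subloop Q m sdp_one ({0} \<times> S)" unfolding Q_def m_def by (rule LS.normal)
  have aS: "quot_associative Q m ({0} \<times> S)" unfolding Q_def m_def by (rule LS.assoc)
  have cS: "quot_commutative Q m ({0} \<times> S)" unfolding Q_def m_def by (rule LS.comm[OF DS])
  have 1: "is_associator_subloop Q m sdp_one ({0} \<times> R)"
    unfolding is_associator_subloop_def is_smallest_def using nR aR minA by blast
  have 2: "is_commutator_subloop Q m sdp_one ({0} \<times> S)"
    unfolding is_commutator_subloop_def is_smallest_def using nS cS minC by blast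
  have 3: "is_derived_subloop Q m sdp_one ({0} \<times> S)"
    unfolding is_derived_subloop_def is_smallest_def using nS cS aS minC by blast
  have 4: "{0} \<times> R \<subseteq> {0} \<times> S" using RS by auto
  show ?thesis using 1 2 3 4 unfolding R_def S_def D_def by simp
qed

end
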